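(* Let $d$ be a positive integer and let $A\in\mathbb{R}^{[3]\times[n]}$ be a matrix that cannot be eliminated at any column. Then there exists $b\in\mathbb{R}^{[3]}$ such that the solution graph $G(R(A,b))$ is not connected.
   Context: Fix a positive integer $d$ and let $D=\{0,1,\dots,d\}$; $[n]=\{1,\dots,n\}$. For $A\in\mathbb{R}^{[m]\times[n]}$ and $b\in\mathbb{R}^{[m]}$, $R(A,b)=\{x\in D^{[n]} : Ax\ge b\}$. For $R\subseteq D^{[n]}$, the solution graph $G(R)$ is the undirected graph with vertex set $R$ in which $x,y$ are adjacent iff they differ in exactly one coordinate. A matrix $A=(a_{ij})\in\mathbb{R}^{[m]\times[n]}$ can be eliminated at column $j\in[n]$ if (i) for every row $i$ with $a_{ij}>0$ we have $a_{ij'}=0$ for all $j'\in[n]\setminus\{j\}$, or (ii) for every row $i$ with $a_{ij}<0$ we have $a_{ij'}=0$ for all $j'\in[n]\setminus\{j\}$. *)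

theory Defs
  imports Complex_Main "HOL-Library.FuncSet"
begin

definition grid :: "nat \<Rightarrow> nat \<Rightarrow> (nat \<Rightarrow> nat) set" where
  "grid d n = {1..n} \<rightarrow>\<^sub>E {0..d}"

definition sol_set :: "nat \<Rightarrow> nat \<Rightarrow> nat \<Rightarrow> (nat \<Rightarrow> nat \<Rightarrow> real) \<Rightarrow> (nat \<Rightarrow> real) \<Rightarrow> (nat \<Rightarrow> nat) set" where
  "sol_set d m n A b =
     {x \<in> grid d n. \<forall>i\<in>{1..m}. (\<Sum>j=1..n. A i j * real (x j)) \<ge> b i}"

definition adj :: "nat \<Rightarrow> (nat \<Rightarrow> nat) \<Rightarrow> (nat \<Rightarrow> nat) \<Rightarrow> bool" where
  "adj n x y \<longleftrightarrow> card {j\<in>{1..n}. x j \<noteq> y j} = 1"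

text \<open>G(R) is connected: any two vertices are joined by a path inside R
  (with the convention that the empty graph is connected).\<close>

definition sol_graph_connected :: "nat \<Rightarrow> (nat \<Rightarrow> nat) set \<Rightarrow> bool" where
  "sol_graph_connected n R \<longleftrightarrow>
     (\<forall>x\<in>R. \<forall>y\<in>R. (x, y) \<in> ({(u, v). u \<in> R \<and> v \<in> R \<and> adj n u v})\<^sup>*)"

definition can_eliminate :: "nat \<Rightarrow> nat \<Rightarrow> (nat \<Rightarrow> nat \<Rightarrow> real) \<Rightarrow> nat \<Rightarrow> bool" where
  "can_eliminate m n A j \<longleftrightarrow>
     (\<forall>i\<in>{1..m}. A i j > 0 \<longrightarrow> (\<forall>j'\<in>{1..n} - {j}. A i j' = 0)) \<or>
     (\<forall>i\<in>{1..m}. A i j < 0 \<longrightarrow> (\<forall>j'\<in>{1..n} - {j}. A i j' = 0))"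

end

theory Submission
  imports Defs
begin

lemma iso_disconnected:
  fixes d n m :: nat and A :: "nat \<Rightarrow> nat \<Rightarrow> real" and x y :: "nat \<Rightarrow> nat"
  assumes x: "x \<in> grid d n" and y: "y \<in> grid d n" and xy: "x \<noteq> y"
  and iso: "\<forall>j\<in>{1..n}. (x j = 0 \<and> (\<exists>i\<in>{1..m}. A i j < 0 \<and> A i j < (\<Sum>l=1..n. A i l * real (y l)) - (\<Sum>l=1..n. A i l * real (x l))))
     \<or> (x j = d \<and> (\<exists>i\<in>{1..m}. A i j > 0 \<and> - A i j < (\<Sum>l=1..n. A i l * real (y l)) - (\<Sum>l=1..n. A i l * real (x l))))"
  shows "\<not> sol_graph_connected n (sol_set d m n A (\<lambda>i. min (\<Sum>l=1..n. A i l * real (x l)) (\<Sum>l=1..n. A i l * real (y l))))"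
proof
  define R where "R = sol_set d m n A (\<lambda>i. min (\<Sum>l=1..n. A i l * real (x l)) (\<Sum>l=1..n. A i l * real (y l)))"
  assume "sol_graph_connected n (sol_set d m n A (\<lambda>i. min (\<Sum>l=1..n. A i l * real (x l)) (\<Sum>l=1..n. A i l * real (y l))))"
  hence con: "sol_graph_connected n R" unfolding R_def .
  have xR: "x \<in> R" using x unfolding R_def sol_set_def by auto
  have yR: "y \<in> R" using y unfolding R_def sol_set_def by auto
  have "(x, y) \<in> ({(u, v). u \<in> R \<and> v \<in> R \<and> adj n u v})\<^sup>*"
    using con xR yR unfolding sol_graph_connected_def by blast
  then obtain x' where e: "(x, x') \<in> {(u, v). u \<in> R \<and> v \<in> R \<and> adj n u v}"
    using xy by (auto elim: converse_rtranclE)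
  hence x'R: "x' \<in> R" and ad: "adj n x x'" by auto
  from ad have "card {j\<in>{1..n}. x j \<noteq> x' j} = 1" unfolding adj_def .
  then obtain j where J: "{j\<in>{1..n}. x j \<noteq> x' j} = {j}" by (rule card_1_singletonE)
  have "j \<in> {j\<in>{1..n}. x j \<noteq> x' j}" using J by simp
  hence j: "j \<in> {1..n}" "x j \<noteq> x' j" by auto
  have oth: "x' l = x l" if "l \<in> {1..n}" "l \<noteq> j" for l
  proof (rule ccontr)
    assume "x' l \<noteq> x l"
    hence "l \<in> {j\<in>{1..n}. x j \<noteq> x' j}" using that by auto
    thus False using J that by blast
  qed
  have x'g: "x' \<in> grid d n" and x'sol: "\<forall>i\<in>{1..m}. (\<Sum>l=1..n. A i l * real (x' l)) \<ge> min (\<Sum>l=1..n. A i l * real (x l)) (\<Sum>l=1..n. A i l * real (y l))"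
    using x'R unfolding R_def sol_set_def by auto
  have x'j: "x' j \<le> d" using x'g j unfolding grid_def by auto
  have diff: "(\<Sum>l=1..n. A i l * real (x' l)) = (\<Sum>l=1..n. A i l * real (x l)) + A i j * (real (x' j) - real (x j))" for i
  proof -
    have "(\<Sum>l=1..n. A i l * real (x' l)) - (\<Sum>l=1..n. A i l * real (x l)) = (\<Sum>l=1..n. A i l * (real (x' l) - real (x l)))"
      by (simp add: sum_subtractf[symmetric] algebra_simps)
    also have "\<dots> = A i j * (real (x' j) - real (x j)) + (\<Sum>l\<in>{1..n}-{j}. A i l * (real (x' l) - real (x l)))"
      using j(1) by (simp add: sum.remove)
    also have "(\<Sum>l\<in>{1..n}-{j}. A i l * (real (x' l) - real (x l))) = 0"
      using oth by (intro sum.neutral) auto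
    finally show ?thesis by simp
  qed
  from iso j(1) show False
  proof (elim ballE disjE conjE bexE)
    fix i assume x0: "x j = 0" and i: "i \<in> {1..m}" and a1: "A i j < 0"
      and a2: "A i j < (\<Sum>l=1..n. A i l * real (y l)) - (\<Sum>l=1..n. A i l * real (x l))"
    have t: "real (x' j) \<ge> 1" using j(2) x0 by simp
    have "A i j * (real (x' j) - 1) \<le> 0" using a1 t by (intro mult_nonpos_nonneg) auto
    hence "A i j * (real (x' j) - real (x j)) \<le> A i j" using x0 by (simp add: algebra_simps)
    hence "(\<Sum>l=1..n. A i l * real (x' l)) < min (\<Sum>l=1..n. A i l * real (x l)) (\<Sum>l=1..n. A i l * real (y l))"
      using diff[of i] a1 a2 by linarith
    thus False using x'sol i by fastforce
  next
    fix i assume xd: "x j = d" and i: "i \<in> {1..m}" and a1: "A i j > 0"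
      and a2: "- A i j < (\<Sum>l=1..n. A i l * real (y l)) - (\<Sum>l=1..n. A i l * real (x l))"
    have t: "real (x' j) - real (x j) \<le> -1" using j(2) xd x'j by simp
    have "A i j * (real (x' j) - real (x j) + 1) \<le> 0" using a1 t by (intro mult_nonneg_nonpos) auto
    hence "A i j * (real (x' j) - real (x j)) \<le> - A i j" by (simp add: algebra_simps)
    hence "(\<Sum>l=1..n. A i l * real (x' l)) < min (\<Sum>l=1..n. A i l * real (x l)) (\<Sum>l=1..n. A i l * real (y l))"
      using diff[of i] a1 a2 by linarith
    thus False using x'sol i by fastforce
  qed auto
qed


lemma build1:
  fixes d n :: nat and A :: "nat \<Rightarrow> nat \<Rightarrow> real" and S :: "nat set" and \<delta> :: "nat \<Rightarrow> real"
  assumes d: "d \<ge> 1" and S: "S \<subseteq> {1..n}" "S \<noteq> {}"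
   and dl: "\<forall>l\<in>S. \<delta> l = 1 \<or> \<delta> l = -1"
   and B: "\<forall>l\<in>S. \<exists>i\<in>{1..3}. \<delta> l * A i l < 0 \<and> \<delta> l * A i l < (\<Sum>l'\<in>S. A i l' * \<delta> l')"
   and W: "\<forall>i\<in>{1..3}. \<forall>i'\<in>{1..3}. i \<noteq> i' \<longrightarrow> (\<Sum>l\<in>S. A i l * \<delta> l) \<ge> 0 \<or> (\<Sum>l\<in>S. A i' l * \<delta> l) \<ge> 0"
   and C: "\<forall>j\<in>{1..n}. \<forall>i\<in>{1..3}. \<exists>i'\<in>{1..3}. i' \<noteq> i \<and> A i' j \<noteq> 0"
  shows "\<exists>b. \<not> sol_graph_connected n (sol_set d 3 n A b)"
proof -
  define w where "w i = (\<Sum>l\<in>S. A i l * \<delta> l)" for i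
  define x where "x l = (if l \<in> {1..n} then (if l \<in> S then (if \<delta> l = 1 then 0 else d)
      else (if \<exists>i\<in>{1..3::nat}. w i \<ge> 0 \<and> A i l < 0 then 0 else d)) else undefined)" for l
  define y where "y l = (if l \<in> S then (if \<delta> l = 1 then 1 else d - 1) else x l)" for l
  have xg: "x \<in> grid d n" unfolding grid_def x_def by auto
  have yg: "y \<in> grid d n" using S(1) d unfolding grid_def y_def x_def by auto
  obtain l0 where l0: "l0 \<in> S" using S(2) by blast
  have xy: "x \<noteq> y"
  proof
    assume "x = y"
    hence "x l0 = y l0" by simp
    thus False using l0 S(1) d dl unfolding x_def y_def by (auto split: if_splits)
  qed
  have fin: "finite S" using S(1) finite_subset by blast
  have Ldiff: "(\<Sum>l=1..n. A i l * real (y l)) - (\<Sum>l=1..n. A i l * real (x l)) = w i" for i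
  proof -
    have "(\<Sum>l=1..n. A i l * real (y l)) - (\<Sum>l=1..n. A i l * real (x l))
        = (\<Sum>l=1..n. A i l * (real (y l) - real (x l)))"
      by (simp add: sum_subtractf[symmetric] algebra_simps)
    also have "\<dots> = (\<Sum>l\<in>{1..n}. if l \<in> S then A i l * \<delta> l else 0)"
    proof (rule sum.cong)
      fix l assume l: "l \<in> {1..n}"
      show "A i l * (real (y l) - real (x l)) = (if l \<in> S then A i l * \<delta> l else 0)"
      proof (cases "l \<in> S")
        case True
        then have "\<delta> l = 1 \<or> \<delta> l = -1" using dl by auto
        then show ?thesis using True l d by (auto simp: x_def y_def of_nat_diff)
      qed (simp add: y_def)
    qed simp
    also have "\<dots> = (\<Sum>l\<in>S. A i l * \<delta> l)"
    proof -
      have "(\<Sum>l\<in>{1..n}. if l \<in> S then A i l * \<delta> l else 0) = (\<Sum>l\<in>{1..n} \<inter> S. A i l * \<delta> l)"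
        using sum.inter_restrict[of "{1..n}" "\<lambda>l. A i l * \<delta> l" S] by simp
      also have "{1..n} \<inter> S = S" using S(1) by blast
      finally show ?thesis .
    qed
    finally show ?thesis unfolding w_def .
  qed
  have iso: "\<forall>j\<in>{1..n}. (x j = 0 \<and> (\<exists>i\<in>{1..3}. A i j < 0 \<and> A i j < w i))
     \<or> (x j = d \<and> (\<exists>i\<in>{1..3}. A i j > 0 \<and> - A i j < w i))"
  proof
    fix j assume j: "j \<in> {1..n}"
    show "(x j = 0 \<and> (\<exists>i\<in>{1..3}. A i j < 0 \<and> A i j < w i))
     \<or> (x j = d \<and> (\<exists>i\<in>{1..3}. A i j > 0 \<and> - A i j < w i))"
    proof (cases "j \<in> S")
      case True
      from B True obtain i where i: "i\<in>{1..3}" "\<delta> j * A i j < 0" "\<delta> j * A i j < w i"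
        unfolding w_def by blast
      from dl True have "\<delta> j = 1 \<or> \<delta> j = -1" by auto
      thus ?thesis
      proof
        assume h: "\<delta> j = 1" then have "x j = 0" using j True by (simp add: x_def)
        with i h show ?thesis by auto
      next
        assume h: "\<delta> j = -1" then have "x j = d" using j True by (simp add: x_def)
        with i h show ?thesis by auto
      qed
    next
      case False
      show ?thesis
      proof (cases "\<exists>i\<in>{1..3::nat}. w i \<ge> 0 \<and> A i j < 0")
        case True
        then have "x j = 0" using j False by (simp add: x_def)
        with True show ?thesis by force
      next
        case nt: False
        then have xj: "x j = d" unfolding x_def using j False nt by auto
        from C j obtain i1 where i1: "i1 \<in> {1..3}" "A i1 j \<noteq> 0" by fastforce
        from C j i1(1) obtain i2 where i2: "i2 \<in> {1..3}" "i2 \<noteq> i1" "A i2 j \<noteq> 0" by blast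
        from W i1(1) i2(1,2) have "w i1 \<ge> 0 \<or> w i2 \<ge> 0" unfolding w_def by auto
        then obtain i where i: "i \<in> {1..3}" "w i \<ge> 0" "A i j \<noteq> 0" using i1 i2 by blast
        with nt have "A i j > 0" by force
        with i xj show ?thesis by force
      qed
    qed
  qed
  have "\<not> sol_graph_connected n (sol_set d 3 n A (\<lambda>i. min (\<Sum>l=1..n. A i l * real (x l)) (\<Sum>l=1..n. A i l * real (y l))))"
    by (rule iso_disconnected[OF xg yg xy]) (use iso in \<open>simp only: Ldiff\<close>)
  then show ?thesis by blast
qed


lemma build:
  fixes d n :: nat and A :: "nat \<Rightarrow> nat \<Rightarrow> real" and S :: "nat set" and \<delta> :: "nat \<Rightarrow> real"
  assumes d: "d \<ge> 1" and S: "S \<subseteq> {1..n}" "S \<noteq> {}"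
   and dl: "\<forall>l\<in>S. \<delta> l = 1 \<or> \<delta> l = -1"
   and B1: "\<forall>l\<in>S. \<exists>i\<in>{1..3}. \<delta> l * A i l < 0 \<and> \<delta> l * A i l < (\<Sum>l'\<in>S. A i l' * \<delta> l')"
   and B2: "\<forall>l\<in>S. \<exists>i\<in>{1..3}. \<delta> l * A i l > 0 \<and> \<delta> l * A i l > (\<Sum>l'\<in>S. A i l' * \<delta> l')"
   and C: "\<forall>j\<in>{1..n}. \<forall>i\<in>{1..3}. \<exists>i'\<in>{1..3}. i' \<noteq> i \<and> A i' j \<noteq> 0"
  shows "\<exists>b. \<not> sol_graph_connected n (sol_set d 3 n A b)"
proof (cases "\<forall>i\<in>{1..3}. \<forall>i'\<in>{1..3}. i \<noteq> i' \<longrightarrow> (\<Sum>l\<in>S. A i l * \<delta> l) \<ge> 0 \<or> (\<Sum>l\<in>S. A i' l * \<delta> l) \<ge> 0")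
  case True
  show ?thesis by (rule build1[OF d S dl B1 True C])
next
  case False
  then obtain i i' where ii: "i \<in> {1..3}" "i' \<in> {1..3}" "i \<noteq> i'"
    "(\<Sum>l\<in>S. A i l * \<delta> l) < 0" "(\<Sum>l\<in>S. A i' l * \<delta> l) < 0" by force
  have neg: "(\<Sum>l\<in>S. A k l * (- \<delta> l)) = - (\<Sum>l\<in>S. A k l * \<delta> l)" for k
    by (simp add: sum_negf[symmetric])
  show ?thesis
  proof (rule build1[OF d S, of "\<lambda>l. - \<delta> l"])
    show "\<forall>l\<in>S. - \<delta> l = 1 \<or> - \<delta> l = -1" using dl by auto
    show "\<forall>l\<in>S. \<exists>i\<in>{1..3}. - \<delta> l * A i l < 0 \<and> - \<delta> l * A i l < (\<Sum>l'\<in>S. A i l' * - \<delta> l')"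
      unfolding neg using B2 by fastforce
    show "\<forall>i\<in>{1..3}. \<forall>i'\<in>{1..3}. i \<noteq> i' \<longrightarrow> 0 \<le> (\<Sum>l\<in>S. A i l * - \<delta> l) \<or> 0 \<le> (\<Sum>l\<in>S. A i' l * - \<delta> l)"
    proof (intro ballI impI)
      fix i1 i2 :: nat assume h: "i1 \<in> {1..3}" "i2 \<in> {1..3}" "i1 \<noteq> i2"
      have "i1 = i \<or> i1 = i' \<or> i2 = i \<or> i2 = i'" using h ii(1-3) by auto
      then show "0 \<le> (\<Sum>l\<in>S. A i1 l * - \<delta> l) \<or> 0 \<le> (\<Sum>l\<in>S. A i2 l * - \<delta> l)"
        unfolding neg using ii(4,5) by auto
    qed
  qed (rule C)
qed


lemma three:
  fixes a b c e :: nat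
  assumes "a \<in> {1..3}" "b \<in> {1..3}" "c \<in> {1..3}" "e \<in> {1..3}" "a \<noteq> b" "a \<noteq> c" "b \<noteq> c"
  shows "e = a \<or> e = b \<or> e = c"
  using assms by auto

theorem lemma6:
  fixes d n :: nat and A :: "nat \<Rightarrow> nat \<Rightarrow> real"
  assumes "d \<ge> 1" and "n \<ge> 1"
    and "\<forall>j\<in>{1..n}. \<not> can_eliminate 3 n A j"
  shows "\<exists>b :: nat \<Rightarrow> real. \<not> sol_graph_connected n (sol_set d 3 n A b)"
proof -
  have ne: "\<forall>j\<in>{1..n}. (\<exists>p\<in>{1..3}. A p j > 0 \<and> (\<exists>j'\<in>{1..n}. j' \<noteq> j \<and> A p j' \<noteq> 0))
      \<and> (\<exists>q\<in>{1..3}. A q j < 0 \<and> (\<exists>j'\<in>{1..n}. j' \<noteq> j \<and> A q j' \<noteq> 0))"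
    using assms(3) unfolding can_eliminate_def by fastforce
  have C: "\<forall>j\<in>{1..n}. \<forall>i\<in>{1..3}. \<exists>i'\<in>{1..3}. i' \<noteq> i \<and> A i' j \<noteq> 0"
  proof (intro ballI)
    fix j i assume j: "j \<in> {1..n}" and i: "i \<in> {1..(3::nat)}"
    from ne j obtain p q where "p \<in> {1..3}" "A p j > 0" "q \<in> {1..3}" "A q j < 0" by blast
    then show "\<exists>i'\<in>{1..3}. i' \<noteq> i \<and> A i' j \<noteq> 0"
    proof (cases "i = p")
      case True
      then show ?thesis using \<open>q \<in> {1..3}\<close> \<open>A q j < 0\<close> \<open>A p j > 0\<close> by (intro bexI[of _ q]) auto
    next
      case False
      then show ?thesis using \<open>p \<in> {1..3}\<close> \<open>A p j > 0\<close> by (intro bexI[of _ p]) auto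
    qed
  qed
  have opp: "\<exists>s\<in>{1..3}. s \<noteq> i \<and> A s j * A i j < 0" if "j \<in> {1..n}" "i \<in> {1..3}" "A i j \<noteq> 0" for i j
  proof -
    from ne that(1) obtain p q where pq: "p \<in> {1..3}" "A p j > 0" "q \<in> {1..3}" "A q j < 0" by blast
    show ?thesis
    proof (cases "A i j > 0")
      case True
      then show ?thesis using pq by (intro bexI[of _ q]) (auto simp: mult_less_0_iff)
    next
      case False
      then have "A i j < 0" using that(3) by simp
      then show ?thesis using pq by (intro bexI[of _ p]) (auto simp: mult_less_0_iff)
    qed
  qed
  show ?thesis
  proof (cases "\<exists>p\<in>{1..3}. \<exists>q\<in>{1..3}. \<exists>k\<in>{1..n}. \<exists>m\<in>{1..n}. k \<noteq> m \<and> A p k * A q k < 0 \<and> A p m * A q m < 0")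
    case True
    then obtain p q k m where pq: "p \<in> {1..3}" "q \<in> {1..3}" and km: "k \<in> {1..n}" "m \<in> {1..n}" "k \<noteq> m"
      and sk: "A p k * A q k < 0" and sm: "A p m * A q m < 0" by blast
    define \<delta> where "\<delta> l = (if l = k then (if A p k > 0 then 1 else -1) else (if A p m > 0 then -1 else 1::real))" for l
    have f1: "\<delta> k * A p k > 0" "\<delta> k * A q k < 0" using sk km(3) by (auto simp: \<delta>_def mult_less_0_iff)
    have f2: "\<delta> m * A p m < 0" "\<delta> m * A q m > 0" using sm km(3) by (auto simp: \<delta>_def mult_less_0_iff)
    have sum: "(\<Sum>l'\<in>{k,m}. A i l' * \<delta> l') = \<delta> k * A i k + \<delta> m * A i m" for i
      using km(3) by (simp add: mult.commute)
    show ?thesis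
    proof (rule build[OF assms(1), of "{k,m}" n \<delta>])
      show "{k, m} \<subseteq> {1..n}" using km by auto
      show "{k, m} \<noteq> {}" by simp
      show "\<forall>l\<in>{k, m}. \<delta> l = 1 \<or> \<delta> l = - 1" by (simp add: \<delta>_def)
      show "\<forall>l\<in>{k, m}. \<exists>i\<in>{1..3}. \<delta> l * A i l < 0 \<and> \<delta> l * A i l < (\<Sum>l'\<in>{k, m}. A i l' * \<delta> l')"
        unfolding sum using pq f1 f2 by force
      show "\<forall>l\<in>{k, m}. \<exists>i\<in>{1..3}. \<delta> l * A i l > 0 \<and> \<delta> l * A i l > (\<Sum>l'\<in>{k, m}. A i l' * \<delta> l')"
        unfolding sum using pq f1 f2 by force
    qed (rule C)
  next
    case False
    then have np: "k = m" if "p \<in> {1..3}" "q \<in> {1..3}" "k \<in> {1..n}" "m \<in> {1..n}"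
      "A p k * A q k < 0" "A p m * A q m < 0" for p q k m
      using that by blast
    have Z: "\<exists>i\<in>{1..3}. A i j = 0" if j: "j \<in> {1..n}" for j
    proof (rule ccontr)
      assume nz: "\<not> (\<exists>i\<in>{1..3}. A i j = 0)"
      from ne j obtain p k1 q k2 where p: "p \<in> {1..3}" "A p j > 0" "k1 \<in> {1..n}" "k1 \<noteq> j" "A p k1 \<noteq> 0"
        and q: "q \<in> {1..3}" "A q j < 0" "k2 \<in> {1..n}" "k2 \<noteq> j" "A q k2 \<noteq> 0" by blast
      show False
      proof (cases "\<forall>s\<in>{1..3}. s \<noteq> q \<longrightarrow> A s j > 0")
        case True
        from opp[OF q(3) q(1) q(5)] obtain s where s: "s \<in> {1..3}" "s \<noteq> q" "A s k2 * A q k2 < 0" by blast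
        have "A s j * A q j < 0" using True s q(2) by (simp add: mult_less_0_iff)
        from np[OF s(1) q(1) j q(3) this s(3)] q(4) show False by simp
      next
        case False
        then obtain s where s: "s \<in> {1..3}" "s \<noteq> q" "\<not> A s j > 0" by blast
        have sneg: "A s j < 0" using s nz by force
        have spq: "s \<noteq> p" using sneg p(2) by auto
        have pq: "p \<noteq> q" using p(2) q(2) by auto
        have allneg: "A s' j < 0" if "s' \<in> {1..3}" "s' \<noteq> p" for s'
          using three[OF p(1) q(1) s(1) that(1) pq spq[symmetric] s(2)[symmetric]] that(2) q(2) sneg by auto
        from opp[OF p(3) p(1) p(5)] obtain s' where s': "s' \<in> {1..3}" "s' \<noteq> p" "A s' k1 * A p k1 < 0" by blast
        have "A s' j * A p j < 0" using allneg[OF s'(1,2)] p(2) by (simp add: mult_less_0_iff)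
        from np[OF s'(1) p(1) j p(3) this s'(3)] p(4) show False by simp
      qed
    qed
    have one: "(1::nat) \<in> {1..n}" using assms(2) by simp
    from ne one obtain p k q l where p: "p \<in> {1..3}" "A p 1 > 0" "k \<in> {1..n}" "k \<noteq> 1" "A p k \<noteq> 0"
      and q: "q \<in> {1..3}" "A q 1 < 0" "l \<in> {1..n}" "l \<noteq> 1" "A q l \<noteq> 0" by blast
    from Z[OF one] obtain r where r: "r \<in> {1..3}" "A r 1 = 0" by blast
    have pq: "p \<noteq> q" and pr: "p \<noteq> r" and qr: "q \<noteq> r" using p(2) q(2) r(2) by auto
    have s1: "A p 1 * A q 1 < 0" using p(2) q(2) by (simp add: mult_less_0_iff)
    from opp[OF p(3) p(1) p(5)] obtain s where s: "s \<in> {1..3}" "s \<noteq> p" "A s k * A p k < 0" by blast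
    have "s \<noteq> q"
    proof
      assume "s = q"
      then have "A p k * A q k < 0" using s(3) by (simp add: mult.commute)
      from np[OF p(1) q(1) one p(3) s1 this] p(4) show False by simp
    qed
    then have "s = r" using three[OF p(1) q(1) r(1) s(1) pq pr qr] s(2) by auto
    with s have rk: "A r k * A p k < 0" by simp
    from Z[OF p(3)] obtain i0 where i0: "i0 \<in> {1..3}" "A i0 k = 0" by blast
    have "i0 \<noteq> p" "i0 \<noteq> r" using i0(2) rk by auto
    then have "i0 = q" using three[OF p(1) q(1) r(1) i0(1) pq pr qr] by auto
    with i0 have qk: "A q k = 0" by simp
    from opp[OF q(3) q(1) q(5)] obtain s' where s': "s' \<in> {1..3}" "s' \<noteq> q" "A s' l * A q l < 0" by blast
    have "s' \<noteq> p"
    proof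
      assume "s' = p"
      then have "A p l * A q l < 0" using s'(3) by simp
      from np[OF p(1) q(1) one q(3) s1 this] q(4) show False by simp
    qed
    then have "s' = r" using three[OF p(1) q(1) r(1) s'(1) pq pr qr] s'(2) by auto
    with s' have rl: "A r l * A q l < 0" by simp
    from Z[OF q(3)] obtain i1 where i1: "i1 \<in> {1..3}" "A i1 l = 0" by blast
    have "i1 \<noteq> q" "i1 \<noteq> r" using i1(2) rl by auto
    then have "i1 = p" using three[OF p(1) q(1) r(1) i1(1) pq pr qr] by auto
    with i1 have pl: "A p l = 0" by simp
    have kl: "k \<noteq> l" using pl p(5) by auto
    define \<delta> where "\<delta> j = (if j = k then (if A r k > 0 then 1 else -1) else if j = l then (if A q l > 0 then 1 else -1) else (1::real))" for j
    have d1: "\<delta> 1 = 1" using p(4) q(4) by (simp add: \<delta>_def)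
    have fk: "\<delta> k * A r k > 0" "\<delta> k * A p k < 0" using rk by (auto simp: \<delta>_def mult_less_0_iff)
    have fl: "\<delta> l * A q l > 0" "\<delta> l * A r l < 0" using rl kl by (auto simp: \<delta>_def mult_less_0_iff)
    have sum: "(\<Sum>l'\<in>{1,k,l}. A i l' * \<delta> l') = A i 1 + \<delta> k * A i k + \<delta> l * A i l" for i
      using p(4) q(4) kl d1 by (simp add: mult.commute)
    show ?thesis
    proof (rule build[OF assms(1), of "{1,k,l}" n \<delta>])
      show "{1, k, l} \<subseteq> {1..n}" using one p(3) q(3) by auto
      show "{1, k, l} \<noteq> {}" by simp
      show "\<forall>j\<in>{1, k, l}. \<delta> j = 1 \<or> \<delta> j = - 1" by (simp add: \<delta>_def)
      show "\<forall>j\<in>{1, k, l}. \<exists>i\<in>{1..3}. \<delta> j * A i j < 0 \<and> \<delta> j * A i j < (\<Sum>l'\<in>{1, k, l}. A i l' * \<delta> l')"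
        unfolding sum using p q r fk fl d1 qk pl by force
      show "\<forall>j\<in>{1, k, l}. \<exists>i\<in>{1..3}. \<delta> j * A i j > 0 \<and> \<delta> j * A i j > (\<Sum>l'\<in>{1, k, l}. A i l' * \<delta> l')"
        unfolding sum using p q r fk fl d1 qk pl by force
    qed (rule C)
  qed
qed

end
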